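(* Let $m\ge3$, $d\ge1$, $n\in\mathbb{N}_0^d$, and $v=t^1\cdots t^m$. For each $c\in\mathbb{R}^d$, the section $x=c$ of the hypersurface $\{(t,x)\in\mathbb{R}^{m+d}:\ H_n(v,x)=0\}$, i.e. the set $\{t\in\mathbb{R}^m_+:\ H_n(t^1\cdots t^m,c)=0\}$, is a union of Tzitzeica hypersurfaces in $\mathbb{R}^m_+$.
   Context: For $n=(n_1,\dots,n_d)\in\mathbb{N}_0^d$ and $\xi\in\mathbb{R}^d$, $\xi^n=(\xi^1)^{n_1}\cdots(\xi^d)^{n_d}$. The Hermite polynomials $H_n(v,x)$, $v\ge0$, $x\in\mathbb{R}^d$, are defined by the generating function $e^{\langle x,\xi\rangle-\frac12 v\|\xi\|^2}=\sum_{n\in\mathbb{N}_0^d}H_n(v,x)\xi^n$. A hypersurface $M\subset\mathbb{R}^m_+$, $m\ge3$, is a Tzitzeica hypersurface if there is a constant $a\in\mathbb{R}$ such that $K=a\,d^{m+1}$ at every point $t\in M$, where $K$ is the Gauss curvature of $M$ at $t$ and $d$ is the distance from the origin to the tangent hyperplane of $M$ at $t$; the simplest examples are the level sets $t^1\cdots t^m=k$. *)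

theory Defs
  imports "HOL-Analysis.Analysis"
begin

definition mpow :: "real^'d \<Rightarrow> ('d::finite \<Rightarrow> nat) \<Rightarrow> real" where
  "mpow \<xi> n = (\<Prod>i\<in>UNIV. (\<xi>$i) ^ (n i))"

definition hermite_H :: "('d::finite \<Rightarrow> nat) \<Rightarrow> real \<Rightarrow> real^'d \<Rightarrow> real" where
  "hermite_H n v x =
     (THE h. \<forall>\<xi>::real^'d. ((\<lambda>k. h k * mpow \<xi> k) has_sum
                 exp (x \<bullet> \<xi> - v / 2 * (norm \<xi>)\<^sup>2)) UNIV) n"

text \<open>Bordered Hessian [[Hess F, grad F],[grad F^T, 0]], indexed by 'm option (None = extra row/col).\<close>
definition bordered :: "real^'m^'m \<Rightarrow> real^'m \<Rightarrow> real^('m::finite option)^('m option)" where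
  "bordered Hs g = (\<chi> i j. case (i, j) of
      (Some a, Some b) \<Rightarrow> Hs$a$b
    | (Some a, None) \<Rightarrow> g$a
    | (None, Some b) \<Rightarrow> g$b
    | (None, None) \<Rightarrow> 0)"

text \<open>Gauss(-Kronecker) curvature of the level hypersurface F = 0 at a point where
  grad F = g and Hess F = Hs (ambient dimension m).\<close>
definition gauss_curv :: "real^'m^'m \<Rightarrow> real^('m::finite) \<Rightarrow> real" where
  "gauss_curv Hs g = - det (bordered Hs g) / (norm g) ^ (CARD('m) + 1)"

definition tangent_dist :: "real^'m \<Rightarrow> real^('m::finite) \<Rightarrow> real" where
  "tangent_dist t g = infdist 0 {s. (s - t) \<bullet> g = 0}"

definition pos_orthant :: "(real^('m::finite)) set" where
  "pos_orthant = {t. \<forall>i. 0 < t$i}"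

definition tzitzeica_hypersurface :: "(real^('m::finite)) set \<Rightarrow> bool" where
  "tzitzeica_hypersurface M \<longleftrightarrow> M \<noteq> {} \<and> M \<subseteq> pos_orthant \<and>
     (\<exists>U F g Hs a. open U \<and> M = {t\<in>U. F t = (0::real)} \<and>
        (\<forall>t\<in>U. (F has_derivative (\<lambda>h. g t \<bullet> h)) (at t) \<and>
                 (g has_derivative (\<lambda>h. Hs t *v h)) (at t)) \<and>
        continuous_on U Hs \<and>
        (\<forall>t\<in>M. g t \<noteq> 0) \<and>
        (\<forall>t\<in>M. gauss_curv (Hs t) (g t) = a * (tangent_dist t (g t)) ^ (CARD('m) + 1)))"

end

theory Submission imports Defs begin

lemma UNIV_option_prod:
  fixes f :: "'m::finite option \<Rightarrow> real"
  shows "(\<Prod>i\<in>UNIV. f i) = f None * (\<Prod>a\<in>UNIV. f (Some a))"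
proof -
  have "(UNIV :: 'm option set) = insert None (Some ` UNIV)" by (auto intro: option.exhaust)
  then have "(\<Prod>i\<in>UNIV. f i) = (\<Prod>i\<in>insert None (range Some). f i)" by simp
  also have "\<dots> = f None * (\<Prod>i\<in>range Some. f i)" by (subst prod.insert) auto
  also have "(\<Prod>i\<in>range Some. f i) = (\<Prod>a\<in>UNIV. f (Some a))" by (simp add: prod.reindex)
  finally show ?thesis .
qed

lemma det_arrow:
  fixes D :: "'m::finite \<Rightarrow> real" and g :: "real^'m"
  assumes D: "\<And>a. D a \<noteq> 0"
  shows "det (bordered (\<chi> a b. if a = b then D a else 0) g)
         = - (\<Sum>a\<in>UNIV. (g$a)^2 / D a) * (\<Prod>a\<in>UNIV. D a)"
proof -
  define B where "B = bordered (\<chi> a b. if a = b then D a else 0) g"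
  define s where "s = - (\<Sum>a\<in>UNIV. (g$a)^2 / D a)"
  have Bss: "B$Some a$Some b = (if a = b then D a else 0)" for a b by (simp add: B_def bordered_def)
  have Bsn: "B$Some a$None = g$a" for a by (simp add: B_def bordered_def)
  have Bns: "B$None$Some b = g$b" for b by (simp add: B_def bordered_def)
  have Bnn: "B$None$None = 0" by (simp add: B_def bordered_def)
  define x1 where "x1 = - (\<Sum>a\<in>UNIV. (g$a / D a) *s row (Some a) B)"
  define B1 where "B1 = (\<chi> k. if k = None then row None B + x1 else row k B)"
  have "x1 \<in> vec.span {row j B |j. j \<noteq> None}"
    unfolding x1_def
    by (intro vec.span_neg vec.span_sum vec.span_scale vec.span_base) auto
  then have d1: "det B1 = det B" unfolding B1_def by (rule det_row_span)
  have x1c: "x1 $ j = - (\<Sum>a\<in>UNIV. (g$a / D a) * B$Some a$j)" for j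
    by (simp add: x1_def sum_component row_def)
  have B1ns: "B1$None$Some b = 0" for b
  proof -
    have "(\<Sum>a\<in>UNIV. (g$a / D a) * B$Some a$Some b) = (\<Sum>a\<in>UNIV. if a = b then g$b else 0)"
      by (intro sum.cong) (auto simp: Bss D)
    then show ?thesis by (simp add: B1_def row_def x1c Bns)
  qed
  have B1nn: "B1$None$None = s"
    by (simp add: B1_def row_def x1c Bsn Bnn s_def power2_eq_square sum_negf)
  have B1s: "B1$Some a = B$Some a" for a by (simp add: B1_def row_def vec_eq_iff)
  define C where "C = transpose B1"
  define x2 where "x2 = - (\<Sum>a\<in>UNIV. (g$a / D a) *s row (Some a) C)"
  define C1 where "C1 = (\<chi> k. if k = None then row None C + x2 else row k C)"
  have "x2 \<in> vec.span {row j C |j. j \<noteq> None}"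
    unfolding x2_def
    by (intro vec.span_neg vec.span_sum vec.span_scale vec.span_base) auto
  then have d2: "det C1 = det C" unfolding C1_def by (rule det_row_span)
  have Cc: "C$i$j = B1$j$i" for i j by (simp add: C_def transpose_def)
  have x2c: "x2 $ j = - (\<Sum>a\<in>UNIV. (g$a / D a) * C$Some a$j)" for j
    by (simp add: x2_def sum_component row_def)
  have C1ns: "C1$None$Some b = 0" for b
  proof -
    have "(\<Sum>a\<in>UNIV. (g$a / D a) * C$Some a$Some b) = (\<Sum>a\<in>UNIV. if a = b then g$b else 0)"
      by (intro sum.cong) (auto simp: Cc B1s Bss D)
    then show ?thesis by (simp add: C1_def row_def x2c Cc B1s Bsn)
  qed
  have C1nn: "C1$None$None = s"
    by (simp add: C1_def row_def x2c Cc B1nn B1ns)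
  have C1sn: "C1$Some a$None = 0" for a
    by (simp add: C1_def row_def Cc B1ns)
  have C1ss: "C1$Some a$Some b = (if a = b then D a else 0)" for a b
    by (simp add: C1_def row_def Cc B1s Bss)
  have "det C1 = (\<Prod>i\<in>UNIV. C1$i$i)"
  proof (rule det_diagonal)
    fix i j :: "'m option" assume "i \<noteq> j"
    then show "C1$i$j = 0"
      by (cases i; cases j) (auto simp: C1ns C1sn C1ss)
  qed
  also have "\<dots> = s * (\<Prod>a\<in>UNIV. D a)"
    by (simp add: UNIV_option_prod C1nn C1ss)
  finally show ?thesis using d1 d2 by (simp add: C_def B_def s_def)
qed


lemma tdist:
  fixes t g :: "real^'m::finite"
  assumes g: "g \<noteq> 0"
  shows "tangent_dist t g = \<bar>t \<bullet> g\<bar> / norm g"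
proof -
  define A where "A = {s. (s - t) \<bullet> g = 0}"
  define s0 where "s0 = ((t \<bullet> g) / (g \<bullet> g)) *\<^sub>R g"
  have gg: "g \<bullet> g \<noteq> 0" using g by simp
  have s0A: "s0 \<in> A" using gg by (simp add: A_def s0_def inner_diff_left)
  have ns0: "norm s0 = \<bar>t \<bullet> g\<bar> / norm g"
    using g by (simp add: s0_def power2_norm_eq_inner[symmetric] abs_div power2_eq_square)
  have le: "infdist 0 A \<le> \<bar>t \<bullet> g\<bar> / norm g"
    using infdist_le[OF s0A, of 0] ns0 by simp
  have ge: "\<bar>t \<bullet> g\<bar> / norm g \<le> infdist 0 A"
  proof -
    have "infdist 0 A = (INF a\<in>A. dist 0 a)" using s0A by (intro infdist_notempty) auto
    also have "\<bar>t \<bullet> g\<bar> / norm g \<le> \<dots>"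
    proof (rule cINF_greatest)
      show "A \<noteq> {}" using s0A by auto
      fix s assume "s \<in> A"
      then have "s \<bullet> g = t \<bullet> g" by (simp add: A_def inner_diff_left)
      then have "\<bar>t \<bullet> g\<bar> \<le> norm s * norm g" using Cauchy_Schwarz_ineq2[of s g] by simp
      then show "\<bar>t \<bullet> g\<bar> / norm g \<le> dist 0 s" using g by (simp add: divide_le_eq)
    qed
    finally show ?thesis .
  qed
  show ?thesis unfolding tangent_dist_def A_def[symmetric] using le ge by simp
qed

lemma open_pos: "open (pos_orthant :: (real^'m::finite) set)"
proof -
  have "(pos_orthant :: (real^'m) set) = (\<Inter>i\<in>UNIV. {t::real^'m. 0 < t$i})" by (auto simp: pos_orthant_def)
  moreover have "open {t::real^'m. 0 < t$i}" for i
    by (intro open_Collect_less continuous_intros)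
  then have "open (\<Inter>i\<in>UNIV. {t::real^'m. 0 < t$i})" by (intro open_INT) auto
  ultimately show ?thesis by simp
qed

lemma vn: "((\<lambda>x::real^'m::finite. x$i) has_derivative (\<lambda>h. h$i)) F"
  by (rule bounded_linear_imp_has_derivative[OF bounded_linear_vec_nth])

lemma dln: "0 < (t::real^'m::finite)$i \<Longrightarrow> ((\<lambda>t::real^'m. ln (t$i)) has_derivative (\<lambda>h. h$i / t$i)) (at t)"
proof -
  assume p: "0 < t$i"
  have "(ln has_derivative (\<lambda>x. inverse (t$i) * x)) (at (t$i))"
    using DERIV_ln[OF p] by (simp add: has_field_derivative_def)
  from has_derivative_compose[OF vn this]
  show ?thesis by (simp add: divide_inverse mult.commute)
qed

lemma dinv: "0 < (t::real^'m::finite)$i \<Longrightarrow> ((\<lambda>t::real^'m. 1 / t$i) has_derivative (\<lambda>h. - h$i / (t$i)^2)) (at t)"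
proof -
  assume p: "0 < t$i"
  have "((\<lambda>x. inverse x) has_field_derivative (- (inverse (t$i) ^ Suc (Suc 0)))) (at (t$i))"
    using DERIV_inverse[of "t$i" UNIV] p by simp
  from has_derivative_compose[OF vn this[unfolded has_field_derivative_def]]
  show ?thesis by (simp add: divide_inverse power2_eq_square mult.commute inverse_mult_distrib)
qed


lemma derF:
  fixes t :: "real^'m::finite"
  assumes "t \<in> pos_orthant"
  shows "((\<lambda>t. (\<Sum>i\<in>UNIV. ln (t$i)) - ln k) has_derivative (\<lambda>h. (\<chi> i. 1 / t$i) \<bullet> h)) (at t)"
proof -
  have pos: "0 < t$i" for i using assms by (auto simp: pos_orthant_def)
  have "((\<lambda>t. ln (t$i)) has_derivative (\<lambda>h. h$i / t$i)) (at t)" for i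
    using pos[of i] by (rule dln)
  then have "((\<lambda>t. (\<Sum>i\<in>UNIV. ln (t$i)) - ln k) has_derivative (\<lambda>h. (\<Sum>i\<in>UNIV. h$i / t$i) - 0)) (at t)"
    by (intro has_derivative_diff has_derivative_sum has_derivative_const) auto
  moreover have "(\<lambda>h. (\<Sum>i\<in>UNIV. h$i / t$i) - 0) = (\<lambda>h. (\<chi> i. 1 / t$i) \<bullet> h)"
    by (auto simp: inner_vec_def)
  ultimately show ?thesis by simp
qed

lemma derg:
  fixes t :: "real^'m::finite"
  assumes "t \<in> pos_orthant"
  shows "((\<lambda>t. (\<chi> i. 1 / t$i)) has_derivative (\<lambda>h. (\<chi> a b. if a = b then - 1 / (t$a)^2 else 0) *v h)) (at t)"
proof -
  have pos: "0 < t$i" for i using assms by (auto simp: pos_orthant_def)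
  have c: "((\<lambda>t. 1 / t$i) has_derivative (\<lambda>h. - h$i / (t$i)^2)) (at t)" for i
    using pos[of i] by (rule dinv)
  have mv: "((\<chi> a b. if a = b then - 1 / (t$a)^2 else 0) *v h) $ i = - h$i / (t$i)^2" for h i
  proof -
    have "(\<Sum>b\<in>UNIV. (if i = b then - 1 / (t$i)^2 else 0) * h$b) = (\<Sum>b\<in>UNIV. if b = i then - h$i / (t$i)^2 else 0)"
      by (intro sum.cong) auto
    then show ?thesis by (simp add: matrix_vector_mult_def)
  qed
  show ?thesis
  proof (subst has_derivative_componentwise_within, intro ballI)
    fix e :: "real^'m" assume "e \<in> Basis"
    then obtain j where e: "e = axis j 1" by (auto simp: Basis_vec_def)
    show "((\<lambda>x. (\<chi> i. 1 / x$i) \<bullet> e) has_derivative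
          (\<lambda>x. ((\<chi> a b. if a = b then - 1 / (t$a)^2 else 0) *v x) \<bullet> e)) (at t)"
      unfolding e inner_axis using c[of j] by (simp add: mv)
  qed
qed

lemma level_tz:
  assumes k: "0 < k"
  shows "tzitzeica_hypersurface {t::real^'m::finite. t \<in> pos_orthant \<and> (\<Prod>i\<in>UNIV. t$i) = k}"
proof -
  define M where "M = {t::real^'m. t \<in> pos_orthant \<and> (\<Prod>i\<in>UNIV. t$i) = k}"
  define F where "F = (\<lambda>t::real^'m. (\<Sum>i\<in>UNIV. ln (t$i)) - ln k)"
  define g where "g = (\<lambda>t::real^'m. \<chi> i. 1 / t$i)"
  define Hs where "Hs = (\<lambda>t::real^'m. (\<chi> a b. if a = b then - 1 / (t$a)^2 else 0) :: real^'m^'m)"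
  define m where "m = CARD('m)"
  have m1: "m \<ge> 1" by (simp add: m_def Suc_le_eq)
  define a where "a = - ((-1)^m / (k^2 * real m ^ m))"
  obtain i0 :: 'm where True by blast
  have ne: "M \<noteq> {}"
  proof -
    have "(\<chi> i. if i = i0 then k else 1) \<in> M"
      using k by (auto simp: M_def pos_orthant_def prod.If_cases)
    then show ?thesis by auto
  qed
  have sub: "M \<subseteq> pos_orthant" by (auto simp: M_def)
  have MF: "M = {t\<in>pos_orthant. F t = 0}"
  proof -
    have "F t = 0 \<longleftrightarrow> (\<Prod>i\<in>UNIV. t$i) = k" if "t \<in> pos_orthant" for t
    proof -
      have pos: "0 < t$i" for i using that by (auto simp: pos_orthant_def)
      have "(\<Sum>i\<in>UNIV. ln (t$i)) = ln (\<Prod>i\<in>UNIV. t$i)"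
        using pos by (subst ln_prod) (auto, metis less_irrefl)
      moreover have "0 < (\<Prod>i\<in>UNIV. t$i)" using pos by (simp add: prod_pos)
      ultimately show ?thesis using k by (simp add: F_def)
    qed
    then show ?thesis by (auto simp: M_def)
  qed
  have der: "\<forall>t\<in>pos_orthant. (F has_derivative (\<lambda>h. g t \<bullet> h)) (at t) \<and>
                 (g has_derivative (\<lambda>h. Hs t *v h)) (at t)"
  proof
    fix t :: "real^'m" assume tp: "t \<in> pos_orthant"
    show "(F has_derivative (\<lambda>h. g t \<bullet> h)) (at t) \<and> (g has_derivative (\<lambda>h. Hs t *v h)) (at t)"
      unfolding F_def g_def Hs_def using derF[OF tp, of k] derg[OF tp] by (intro conjI)
  qed
  have c: "continuous_on (pos_orthant :: (real^'m::finite) set) (\<lambda>t::real^'m. -1/(t$a)^2)" for a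
  proof -
    have nz: "(t$a)^2 \<noteq> 0" if "t \<in> pos_orthant" for t :: "real^'m"
    proof -
      from that have "0 < t$a" by (simp add: pos_orthant_def)
      then show ?thesis by simp
    qed
    show ?thesis by (intro continuous_intros) (use nz in auto)
  qed
  have cont: "continuous_on pos_orthant Hs"
    unfolding Hs_def
  proof (intro continuous_on_vec_lambda)
    fix a b :: 'm
    show "continuous_on pos_orthant (\<lambda>t::real^'m. if a = b then - 1 / (t$a)^2 else 0)"
      using c[of a] by (cases "a = b") auto
  qed
  have gnz: "\<forall>t\<in>M. g t \<noteq> 0"
  proof
    fix t assume "t \<in> M"
    then have "0 < t$i0" by (auto simp: M_def pos_orthant_def)
    then have "g t $ i0 \<noteq> 0" by (simp add: g_def)
    then show "g t \<noteq> 0" by auto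
  qed
  have curv: "\<forall>t\<in>M. gauss_curv (Hs t) (g t) = a * (tangent_dist t (g t)) ^ (CARD('m) + 1)"
  proof
    fix t assume tM: "t \<in> M"
    have pos: "0 < t$i" for i using tM by (auto simp: M_def pos_orthant_def)
    have P: "(\<Prod>i\<in>UNIV. t$i) = k" using tM by (auto simp: M_def)
    have det: "det (bordered (Hs t) (g t)) = real m * (-1)^m / k^2"
    proof -
      have "det (bordered (Hs t) (g t)) = - (\<Sum>a\<in>UNIV. (g t$a)^2 / (- 1 / (t$a)^2)) * (\<Prod>a\<in>UNIV. - 1 / (t$a)^2)"
        unfolding Hs_def using pos by (intro det_arrow) (auto, metis less_irrefl)
      also have "(\<Sum>a\<in>UNIV. (g t$a)^2 / (- 1 / (t$a)^2)) = (\<Sum>a\<in>(UNIV::'m set). -1)"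
        using pos by (intro sum.cong[OF refl]) (auto simp: g_def power2_eq_square, metis less_irrefl)
      also have "(\<Prod>a\<in>UNIV. - 1 / (t$a)^2) = (\<Prod>a\<in>(UNIV::'m set). (-1::real)) / (\<Prod>a\<in>UNIV. t$a)^2"
        by (simp only: prod_dividef prod_power_distrib)
      finally show ?thesis using P by (simp add: m_def)
    qed
    have tg: "t \<bullet> g t = real m"
    proof -
      have "(\<Sum>i\<in>UNIV. t$i * (1 / t$i)) = (\<Sum>i\<in>(UNIV::'m set). 1)"
        using pos by (intro sum.cong[OF refl]) (auto, metis less_irrefl)
      then show ?thesis by (simp add: inner_vec_def g_def m_def)
    qed
    define N where "N = norm (g t)"
    have N: "N > 0" using gnz tM by (simp add: N_def)
    have td: "tangent_dist t (g t) = real m / N"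
      using tdist[of "g t" t] gnz tM tg by (simp add: N_def)
    have "gauss_curv (Hs t) (g t) = - (real m * (-1)^m / k^2) / N ^ (m + 1)"
      by (simp add: gauss_curv_def det N_def m_def)
    also have "\<dots> = a * (real m / N) ^ (m + 1)"
    proof -
      have mm: "real m ^ m \<noteq> 0" using m1 by simp
      have "(real m / N) ^ (m + 1) = real m * real m ^ m / N ^ (m+1)" by (simp add: power_divide)
      then show ?thesis using mm N k by (simp add: a_def divide_simps)
    qed
    finally show "gauss_curv (Hs t) (g t) = a * (tangent_dist t (g t)) ^ (CARD('m) + 1)"
      using td by (simp add: m_def)
  qed
  show ?thesis
    unfolding tzitzeica_hypersurface_def M_def[symmetric]
    apply (rule conjI[OF ne conjI[OF sub]])
    apply (rule exI[of _ pos_orthant], rule exI[of _ F], rule exI[of _ g], rule exI[of _ Hs], rule exI[of _ a])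
    apply (rule conjI[OF open_pos conjI[OF MF conjI[OF der conjI[OF cont conjI[OF gnz curv]]]]])
    done
qed

theorem mainTheorem8:
  fixes n :: "'d::finite \<Rightarrow> nat" and c :: "real^'d"
  assumes "CARD('m::finite) \<ge> 3"
  shows "\<exists>\<M>::(real^'m) set set. (\<forall>M\<in>\<M>. tzitzeica_hypersurface M) \<and>
           \<Union>\<M> = {t \<in> pos_orthant. hermite_H n (\<Prod>i\<in>UNIV. t$i) c = 0}"
proof -
  define L where "L = (\<lambda>k. {t::real^'m. t \<in> pos_orthant \<and> (\<Prod>i\<in>UNIV. t$i) = k})"
  define K where "K = {k. 0 < k \<and> hermite_H n k c = 0}"
  define \<M> where "\<M> = L ` K"
  have A: "\<forall>M\<in>\<M>. tzitzeica_hypersurface M"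
  proof
    fix M assume "M \<in> \<M>"
    then obtain k where kK: "k \<in> K" and M: "M = L k" unfolding \<M>_def by blast
    from kK have k: "0 < k" unfolding K_def by simp
    show "tzitzeica_hypersurface M" unfolding M L_def by (rule level_tz[OF k])
  qed
  have B: "\<Union>\<M> = {t \<in> pos_orthant. hermite_H n (\<Prod>i\<in>UNIV. t$i) c = 0}"
  proof (rule set_eqI)
    fix t :: "real^'m"
    show "t \<in> \<Union>\<M> \<longleftrightarrow> t \<in> {t \<in> pos_orthant. hermite_H n (\<Prod>i\<in>UNIV. t$i) c = 0}"
    proof
      assume "t \<in> \<Union>\<M>"
      then obtain k where kK: "k \<in> K" and tL: "t \<in> L k" unfolding \<M>_def by blast
      from tL have tp: "t \<in> pos_orthant" and P: "(\<Prod>i\<in>UNIV. t$i) = k" unfolding L_def by simp_all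
      from kK have "hermite_H n k c = 0" unfolding K_def by simp
      then show "t \<in> {t \<in> pos_orthant. hermite_H n (\<Prod>i\<in>UNIV. t$i) c = 0}" using tp P by simp
    next
      assume t: "t \<in> {t \<in> pos_orthant. hermite_H n (\<Prod>i\<in>UNIV. t$i) c = 0}"
      then have tp: "t \<in> pos_orthant" and H: "hermite_H n (\<Prod>i\<in>UNIV. t$i) c = 0" by simp_all
      from tp have "\<forall>i. 0 < t$i" unfolding pos_orthant_def by simp
      then have "0 < (\<Prod>i\<in>UNIV. t$i)" by (simp add: prod_pos)
      with H have kK: "(\<Prod>i\<in>UNIV. t$i) \<in> K" unfolding K_def by simp
      have "t \<in> L (\<Prod>i\<in>UNIV. t$i)" using tp unfolding L_def by simp
      with kK show "t \<in> \<Union>\<M>" unfolding \<M>_def by blast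
    qed
  qed
  show ?thesis by (rule exI[of _ \<M>], rule conjI[OF A B])
qed

end
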